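(* Let $(G,Y)$ be a finite $C$-group. Then the commutator subgroup $[G,G]$ is finite. Moreover, each $g\in[G,G]$ can be written in the form $g=c^{-1}\prod_{i=1}^m y_{i,1}^{k_ip_i}y_{i,1}^{a_{i,1}}y_{i,2}^{a_{i,2}}\cdots y_{i,n_i}^{a_{i,n_i}}$, where $c$ is the canonical element of $G$ and the integers $k_i,a_{i,j}$ satisfy $\sum_{j=1}^{n_i}a_{i,j}+k_ip_i=n_ip_i$, $0<a_{i,j}\le p_i$ and $0\le k_i<n_i$.
   Context: A finite $C$-group is a pair $(G,Y)$ with $Y$ a finite conjugation-invariant subset of the group $G$, $1\notin Y$, such that $G$ has a presentation with generators the elements of $Y$ and defining relations all of the form $z^{-1}yz=y'$ ($y,y',z\in Y$). Write $Y=C_1\sqcup\dots\sqcup C_m$ for the decomposition into conjugacy classes of $G$, with enumerations $C_i=\{y_{i,1},\dots,y_{i,n_i}\}$; $p_i$ is the least $p\ge1$ such that $y^p$ is central in $G$ for $y\in C_i$ (independent of $y\in C_i$). The canonical element of $G$ is $c=\prod_{i=1}^m\prod_{j=1}^{n_i}y_{i,j}^{p_i}$. *)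

theory Defs
  imports "HOL-Algebra.Algebra"
begin

definition gprod :: "('a, 'b) monoid_scheme \<Rightarrow> 'a list \<Rightarrow> 'a" where
  "gprod G xs = foldr (\<lambda>x acc. x \<otimes>\<^bsub>G\<^esub> acc) xs \<one>\<^bsub>G\<^esub>"

definition letter_val :: "('a, 'b) monoid_scheme \<Rightarrow> 'a \<times> bool \<Rightarrow> 'a" where
  "letter_val G l = (if snd l then fst l else inv\<^bsub>G\<^esub> (fst l))"

definition word_eval :: "('a, 'b) monoid_scheme \<Rightarrow> ('a \<times> bool) list \<Rightarrow> 'a" where
  "word_eval G w = gprod G (map (letter_val G) w)"

text \<open>The congruence on words generated by free cancellation and the
  relations z^-1 y z = y' for (y, z, y') in R: two words are congruent iff
  they represent the same element of the group presented by generators Y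
  and relations R.\<close>
inductive word_congr :: "'a set \<Rightarrow> ('a \<times> 'a \<times> 'a) set \<Rightarrow> ('a \<times> bool) list \<Rightarrow> ('a \<times> bool) list \<Rightarrow> bool"
  for Y R where
  wc_refl: "word_congr Y R u u"
| wc_sym: "word_congr Y R u v \<Longrightarrow> word_congr Y R v u"
| wc_trans: "word_congr Y R u v \<Longrightarrow> word_congr Y R v w \<Longrightarrow> word_congr Y R u w"
| wc_cancel: "y \<in> Y \<Longrightarrow> word_congr Y R (u @ [(y, b), (y, \<not> b)] @ v) (u @ v)"
| wc_rel: "(y, z, y') \<in> R \<Longrightarrow>
    word_congr Y R (u @ [(z, False), (y, True), (z, True)] @ v) (u @ [(y', True)] @ v)"

text \<open>(G, Y) is a finite C-group: G is a group, Y a finite conjugation-invariant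
  subset not containing 1, and G has a presentation with generators the elements
  of Y (mapped identically) and defining relations R, all of the form
  z^-1 y z = y' with y, z, y' in Y.\<close>
definition finite_C_group :: "('a, 'b) monoid_scheme \<Rightarrow> 'a set \<Rightarrow> bool" where
  "finite_C_group G Y \<longleftrightarrow>
     group G \<and> finite Y \<and> Y \<subseteq> carrier G \<and> \<one>\<^bsub>G\<^esub> \<notin> Y \<and>
     (\<forall>g \<in> carrier G. \<forall>y \<in> Y. inv\<^bsub>G\<^esub> g \<otimes>\<^bsub>G\<^esub> y \<otimes>\<^bsub>G\<^esub> g \<in> Y) \<and>
     (\<exists>R \<subseteq> Y \<times> Y \<times> Y.
        (\<forall>g \<in> carrier G. \<exists>w. fst ` set w \<subseteq> Y \<and> word_eval G w = g) \<and>
        (\<forall>u v. fst ` set u \<subseteq> Y \<longrightarrow> fst ` set v \<subseteq> Y \<longrightarrow>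
           (word_eval G u = word_eval G v \<longleftrightarrow> word_congr Y R u v)))"

definition conj_class :: "('a, 'b) monoid_scheme \<Rightarrow> 'a \<Rightarrow> 'a set" where
  "conj_class G y = {inv\<^bsub>G\<^esub> g \<otimes>\<^bsub>G\<^esub> y \<otimes>\<^bsub>G\<^esub> g | g. g \<in> carrier G}"

definition central :: "('a, 'b) monoid_scheme \<Rightarrow> 'a \<Rightarrow> bool" where
  "central G x \<longleftrightarrow> x \<in> carrier G \<and> (\<forall>g \<in> carrier G. g \<otimes>\<^bsub>G\<^esub> x = x \<otimes>\<^bsub>G\<^esub> g)"

definition cperiod :: "('a, 'b) monoid_scheme \<Rightarrow> 'a \<Rightarrow> nat" where
  "cperiod G y = (LEAST p. p \<ge> 1 \<and> central G (y [^]\<^bsub>G\<^esub> p))"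

definition class_enumeration :: "('a, 'b) monoid_scheme \<Rightarrow> 'a set \<Rightarrow> 'a list list \<Rightarrow> bool" where
  "class_enumeration G Y ys \<longleftrightarrow>
     (\<forall>i < length ys. ys ! i \<noteq> [] \<and> distinct (ys ! i) \<and>
        set (ys ! i) = conj_class G (hd (ys ! i))) \<and>
     (\<forall>i < length ys. \<forall>j < length ys. i \<noteq> j \<longrightarrow> set (ys ! i) \<inter> set (ys ! j) = {}) \<and>
     Y = (\<Union>i < length ys. set (ys ! i))"

definition canonical_element :: "('a, 'b) monoid_scheme \<Rightarrow> 'a list list \<Rightarrow> 'a" where
  "canonical_element G ys =
     gprod G (map (\<lambda>cl. gprod G (map (\<lambda>y. y [^]\<^bsub>G\<^esub> cperiod G (hd cl)) cl)) ys)"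

end

theory Submission
  imports Defs
begin

lemma (in monoid) gprod_closed: "set xs \<subseteq> carrier G \<Longrightarrow> gprod G xs \<in> carrier G"
  by (induct xs) (auto simp: gprod_def)

lemma (in monoid) gprod_Cons: "gprod G (x # xs) = x \<otimes> gprod G xs"
  by (simp add: gprod_def)
lemma (in monoid) gprod_Nil: "gprod G [] = \<one>"
  by (simp add: gprod_def)

lemma (in monoid) gprod_append:
  "set xs \<subseteq> carrier G \<Longrightarrow> set ys \<subseteq> carrier G \<Longrightarrow> gprod G (xs @ ys) = gprod G xs \<otimes> gprod G ys"
proof (induct xs)
  case Nil then show ?case by (simp add: gprod_Nil gprod_closed)
next
  case (Cons x xs)
  have "gprod G ((x # xs) @ ys) = x \<otimes> gprod G (xs @ ys)" by (simp add: gprod_def)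
  also have "\<dots> = x \<otimes> (gprod G xs \<otimes> gprod G ys)" using Cons by simp
  also have "\<dots> = (x \<otimes> gprod G xs) \<otimes> gprod G ys" using Cons by (simp add: m_assoc gprod_closed)
  finally show ?case by (simp add: gprod_def)
qed

lemma (in monoid) gprod_concat:
  "(\<And>xs. xs \<in> set xss \<Longrightarrow> set xs \<subseteq> carrier G) \<Longrightarrow> gprod G (concat xss) = gprod G (map (gprod G) xss)"
proof (induct xss)
  case (Cons a xss)
  have "set a \<subseteq> carrier G" "set (concat xss) \<subseteq> carrier G" using Cons.prems by auto
  with Cons show ?case by (simp add: gprod_append gprod_Cons)
qed (simp add: gprod_Nil)

lemma (in monoid) gprod_replicate: "x \<in> carrier G \<Longrightarrow> gprod G (replicate k x) = x [^] k"
proof (induct k)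
  case (Suc k)
  have "x [^] Suc k = x \<otimes> x [^] k" by (rule nat_pow_Suc2[OF Suc.prems])
  with Suc show ?case by (simp only: replicate_Suc gprod_Cons)
qed (simp add: gprod_Nil)

lemma (in monoid) gprod_ones: "(\<And>x. x \<in> set xs \<Longrightarrow> x = \<one>) \<Longrightarrow> gprod G xs = \<one>"
proof (induct xs)
  case (Cons a xs)
  have a: "a = \<one>" using Cons.prems[of a] by simp
  have "gprod G xs = \<one>" using Cons.prems by (intro Cons.hyps) simp
  with a show ?case by (simp add: gprod_Cons)
qed (simp add: gprod_Nil)

lemma (in group) mult_inv_cancel_left [simp]: "x \<in> carrier G \<Longrightarrow> y \<in> carrier G \<Longrightarrow> x \<otimes> (inv x \<otimes> y) = y"
  by (simp add: m_assoc[symmetric])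
lemma (in group) inv_mult_cancel_left [simp]: "x \<in> carrier G \<Longrightarrow> y \<in> carrier G \<Longrightarrow> inv x \<otimes> (x \<otimes> y) = y"
  by (simp add: m_assoc[symmetric])

lemma (in group) letter_val_closed: "fst l \<in> carrier G \<Longrightarrow> letter_val G l \<in> carrier G"
  by (auto simp: letter_val_def)

lemma (in group) word_eval_closed:
  "fst ` set w \<subseteq> carrier G \<Longrightarrow> word_eval G w \<in> carrier G"
  unfolding word_eval_def by (rule gprod_closed) (auto intro!: letter_val_closed)

lemma (in group) word_eval_Nil: "word_eval G [] = \<one>"
  by (simp add: word_eval_def gprod_Nil)

lemma (in group) word_eval_Cons: "word_eval G (l # w) = letter_val G l \<otimes> word_eval G w"
  by (simp add: word_eval_def gprod_Cons)

lemma (in group) word_eval_append: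
  "fst ` set u \<subseteq> carrier G \<Longrightarrow> fst ` set v \<subseteq> carrier G \<Longrightarrow>
   word_eval G (u @ v) = word_eval G u \<otimes> word_eval G v"
  unfolding word_eval_def by (subst map_append, rule gprod_append) (auto intro!: letter_val_closed)

definition winv :: "('a \<times> bool) list \<Rightarrow> ('a \<times> bool) list" where
  "winv w = rev (map (\<lambda>l. (fst l, \<not> snd l)) w)"

lemma fst_set_winv[simp]: "fst ` set (winv w) = fst ` set w"
  by (force simp: winv_def)

lemma winv_Cons: "winv (l # w) = winv w @ [(fst l, \<not> snd l)]"
  by (simp add: winv_def)

lemma (in group) word_eval_winv:
  "fst ` set w \<subseteq> carrier G \<Longrightarrow> word_eval G (winv w) = inv (word_eval G w)"
proof (induct w)
  case Nil then show ?case by (simp add: winv_def word_eval_Nil)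
next
  case (Cons l w)
  have l: "fst l \<in> carrier G" and w: "fst ` set w \<subseteq> carrier G" using Cons.prems by auto
  have lv: "letter_val G (fst l, \<not> snd l) = inv (letter_val G l)"
    using l by (auto simp: letter_val_def)
  have "word_eval G (winv (l # w)) = word_eval G (winv w) \<otimes> word_eval G [(fst l, \<not> snd l)]"
    unfolding winv_Cons using l w by (intro word_eval_append) auto
  also have "\<dots> = inv (word_eval G w) \<otimes> inv (letter_val G l)"
    using Cons l w by (simp add: word_eval_Cons word_eval_Nil lv letter_val_closed)
  also have "\<dots> = inv (letter_val G l \<otimes> word_eval G w)"
    using l w by (simp add: inv_mult_group letter_val_closed word_eval_closed)
  finally show ?case by (simp add: word_eval_Cons)
qed

lemma (in group) central_carrier: "central G a \<Longrightarrow> a \<in> carrier G"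
  unfolding central_def by blast

lemma (in group) central_comm: "central G a \<Longrightarrow> g \<in> carrier G \<Longrightarrow> g \<otimes> a = a \<otimes> g"
  unfolding central_def by blast

lemma (in group) centralI: "a \<in> carrier G \<Longrightarrow> (\<And>g. g \<in> carrier G \<Longrightarrow> g \<otimes> a = a \<otimes> g) \<Longrightarrow> central G a"
  unfolding central_def by blast

lemma (in group) central_mult:
  assumes ca: "central G a" and cb: "central G b" shows "central G (a \<otimes> b)"
proof (rule centralI)
  have a: "a \<in> carrier G" and b: "b \<in> carrier G" using ca cb by (auto dest: central_carrier)
  then show "a \<otimes> b \<in> carrier G" by simp
  fix g assume g: "g \<in> carrier G"
  have "g \<otimes> (a \<otimes> b) = (g \<otimes> a) \<otimes> b" using a b g by (simp add: m_assoc)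
  also have "\<dots> = (a \<otimes> g) \<otimes> b" using central_comm[OF ca g] by simp
  also have "\<dots> = a \<otimes> (g \<otimes> b)" using a b g by (simp add: m_assoc)
  also have "\<dots> = a \<otimes> (b \<otimes> g)" using central_comm[OF cb g] by simp
  also have "\<dots> = (a \<otimes> b) \<otimes> g" using a b g by (simp add: m_assoc)
  finally show "g \<otimes> (a \<otimes> b) = a \<otimes> b \<otimes> g" .
qed

lemma (in group) central_one: "central G \<one>"
  by (rule centralI) auto

lemma (in group) central_inv:
  assumes ca: "central G a" shows "central G (inv a)"
proof (rule centralI)
  have a: "a \<in> carrier G" using ca by (rule central_carrier)
  then show "inv a \<in> carrier G" by simp
  fix g assume g: "g \<in> carrier G"
  have e: "g \<otimes> a = a \<otimes> g" using central_comm[OF ca g] .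
  have "g \<otimes> inv a = inv a \<otimes> (a \<otimes> g) \<otimes> inv a" using a g by (simp add: m_assoc)
  also have "\<dots> = inv a \<otimes> (g \<otimes> a) \<otimes> inv a" using e by simp
  also have "\<dots> = inv a \<otimes> g" using a g by (simp add: m_assoc)
  finally show "g \<otimes> inv a = inv a \<otimes> g" .
qed

lemma (in group) central_int_pow: "central G a \<Longrightarrow> central G (a [^] (k::int))"
proof -
  assume a: "central G a"
  have nat: "central G (a [^] (m::nat))" for m
    by (induct m) (auto simp: central_one central_mult a nat_pow_Suc)
  have c1: "central G (inv (a [^] nat (-k)))" by (rule central_inv[OF nat])
  have c2: "central G (a [^] nat k)" by (rule nat)
  show ?thesis
    by (subst int_pow_def2) (use c1 c2 in \<open>simp only: simp_thms split: if_split\<close>)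
qed

lemma (in group) central_gprod: "(\<And>x. x \<in> set xs \<Longrightarrow> central G x) \<Longrightarrow> central G (gprod G xs)"
  by (induct xs) (auto simp: gprod_Cons gprod_Nil central_one central_mult)

lemma (in group) gprod_mult_central:
  assumes "\<And>i. i \<in> set L \<Longrightarrow> a i \<in> carrier G" "\<And>i. i \<in> set L \<Longrightarrow> central G (b i)"
  shows "gprod G (map (\<lambda>i. a i \<otimes> b i) L) = gprod G (map a L) \<otimes> gprod G (map b L)"
  using assms
proof (induct L)
  case Nil then show ?case by (simp add: gprod_Nil)
next
  case (Cons x L)
  have ax: "a x \<in> carrier G" and bx: "central G (b x)" using Cons.prems by auto
  have A: "gprod G (map a L) \<in> carrier G" using Cons.prems by (auto intro!: gprod_closed)
  have B: "central G (gprod G (map b L))" using Cons.prems by (auto intro!: central_gprod)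
  have bxc: "b x \<in> carrier G" and Bc: "gprod G (map b L) \<in> carrier G" using bx B by (auto dest: central_carrier)
  have "gprod G (map (\<lambda>i. a i \<otimes> b i) (x # L)) = a x \<otimes> b x \<otimes> (gprod G (map a L) \<otimes> gprod G (map b L))"
    using Cons by (simp add: gprod_Cons)
  also have "\<dots> = a x \<otimes> (b x \<otimes> gprod G (map a L)) \<otimes> gprod G (map b L)"
    using ax bxc A Bc by (simp add: m_assoc)
  also have "\<dots> = a x \<otimes> (gprod G (map a L) \<otimes> b x) \<otimes> gprod G (map b L)"
    using central_comm[OF bx A] by simp
  also have "\<dots> = (a x \<otimes> gprod G (map a L)) \<otimes> (b x \<otimes> gprod G (map b L))"
    using ax bxc A Bc by (simp add: m_assoc)
  finally show ?case by (simp add: gprod_Cons)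
qed

lemma (in group) gprod_central_mult:
  assumes "\<And>i. i \<in> set L \<Longrightarrow> a i \<in> carrier G" "\<And>i. i \<in> set L \<Longrightarrow> central G (b i)"
  shows "gprod G (map (\<lambda>i. b i \<otimes> a i) L) = gprod G (map b L) \<otimes> gprod G (map a L)"
proof -
  have "gprod G (map (\<lambda>i. b i \<otimes> a i) L) = gprod G (map (\<lambda>i. a i \<otimes> b i) L)"
    using assms by (intro arg_cong[where f="gprod G"] map_cong refl) (metis central_comm)
  also have "\<dots> = gprod G (map a L) \<otimes> gprod G (map b L)" by (rule gprod_mult_central[OF assms])
  also have "\<dots> = gprod G (map b L) \<otimes> gprod G (map a L)"
  proof -
    have c: "central G (gprod G (map b L))" using assms by (intro central_gprod) auto
    have "gprod G (map a L) \<in> carrier G" using assms by (intro gprod_closed) auto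
    then show ?thesis using central_comm[OF c] by simp
  qed
  finally show ?thesis .
qed

lemma (in group) inv_gprod_central:
  assumes "\<And>i. i \<in> set L \<Longrightarrow> central G (b i)"
  shows "inv (gprod G (map b L)) = gprod G (map (\<lambda>i. inv (b i)) L)"
  using assms
proof (induct L)
  case Nil then show ?case by (simp add: gprod_Nil)
next
  case (Cons x L)
  have bx: "central G (b x)" and B: "central G (gprod G (map b L))" using Cons.prems by (auto intro!: central_gprod)
  have "inv (gprod G (map b (x # L))) = inv (gprod G (map b L)) \<otimes> inv (b x)"
    using central_carrier[OF bx] central_carrier[OF B] by (simp add: gprod_Cons inv_mult_group)
  also have "\<dots> = inv (b x) \<otimes> inv (gprod G (map b L))"
    using central_comm[OF central_inv[OF bx], of "inv (gprod G (map b L))"] central_carrier[OF B] by simp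
  finally show ?case using Cons by (simp add: gprod_Cons)
qed

lemma (in group) gprod_int_pow_sum:
  "x \<in> carrier G \<Longrightarrow> gprod G (map (\<lambda>j. x [^] (q j :: int)) L) = x [^] (\<Sum>j\<leftarrow>L. q j)"
  by (induct L) (auto simp: gprod_Cons gprod_Nil int_pow_mult)

lemma (in group) conj_nat_pow:
  "g \<in> carrier G \<Longrightarrow> h \<in> carrier G \<Longrightarrow> (inv g \<otimes> h \<otimes> g) [^] (k::nat) = inv g \<otimes> h [^] k \<otimes> g"
proof (induct k)
  case 0 then show ?case by simp
next
  case (Suc k)
  have "(inv g \<otimes> h \<otimes> g) [^] Suc k = (inv g \<otimes> h [^] k \<otimes> g) \<otimes> (inv g \<otimes> h \<otimes> g)" using Suc by simp
  also have "\<dots> = inv g \<otimes> (h [^] k \<otimes> (g \<otimes> inv g) \<otimes> h) \<otimes> g" using Suc.prems by (simp add: m_assoc)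
  also have "\<dots> = inv g \<otimes> h [^] Suc k \<otimes> g" using Suc.prems by (simp add: m_assoc)
  finally show ?case .
qed



locale CG = group G for G :: "('a, 'b) monoid_scheme" (structure) +
  fixes Y :: "'a set" and ys :: "'a list list" and R :: "('a \<times> 'a \<times> 'a) set"
  assumes finY: "finite Y" and Ysub: "Y \<subseteq> carrier G"
  and Yconj: "\<And>g y. g \<in> carrier G \<Longrightarrow> y \<in> Y \<Longrightarrow> inv g \<otimes> y \<otimes> g \<in> Y"
  and Rsub: "R \<subseteq> Y \<times> Y \<times> Y"
  and gen: "\<And>g. g \<in> carrier G \<Longrightarrow> \<exists>w. fst ` set w \<subseteq> Y \<and> word_eval G w = g"
  and pres: "\<And>u v. fst ` set u \<subseteq> Y \<Longrightarrow> fst ` set v \<subseteq> Y \<Longrightarrow>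
           (word_eval G u = word_eval G v \<longleftrightarrow> word_congr Y R u v)"
  and enum: "class_enumeration G Y ys"
begin

abbreviation "n \<equiv> length ys"
abbreviation cls :: "nat \<Rightarrow> 'a set" where "cls i \<equiv> set (ys ! i)"

lemma enum_facts:
  "i < n \<Longrightarrow> ys ! i \<noteq> []" "i < n \<Longrightarrow> distinct (ys ! i)"
  "i < n \<Longrightarrow> cls i = conj_class G (hd (ys ! i))"
  "i < n \<Longrightarrow> j < n \<Longrightarrow> i \<noteq> j \<Longrightarrow> cls i \<inter> cls j = {}"
  "Y = (\<Union>i < n. cls i)"
proof -
  have E: "(\<forall>i < n. ys ! i \<noteq> [] \<and> distinct (ys ! i) \<and> cls i = conj_class G (hd (ys ! i)))"
    "(\<forall>i < n. \<forall>j < n. i \<noteq> j \<longrightarrow> cls i \<inter> cls j = {})" "Y = (\<Union>i < n. cls i)"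
    using enum unfolding class_enumeration_def by blast+
  show "i < n \<Longrightarrow> ys ! i \<noteq> []" "i < n \<Longrightarrow> distinct (ys ! i)"
    "i < n \<Longrightarrow> cls i = conj_class G (hd (ys ! i))"
    "i < n \<Longrightarrow> j < n \<Longrightarrow> i \<noteq> j \<Longrightarrow> cls i \<inter> cls j = {}"
    "Y = (\<Union>i < n. cls i)" using E by blast+
qed

lemma cls_sub: "i < n \<Longrightarrow> cls i \<subseteq> Y"
  using enum_facts(5) by auto

lemma cls_carrier: "i < n \<Longrightarrow> y \<in> cls i \<Longrightarrow> y \<in> carrier G"
  using cls_sub Ysub by auto

lemma Y_cls: "y \<in> Y \<Longrightarrow> \<exists>i<n. y \<in> cls i"
  using enum_facts(5) by auto

lemma cls_disj: "i < n \<Longrightarrow> j < n \<Longrightarrow> y \<in> cls i \<Longrightarrow> y \<in> cls j \<Longrightarrow> i = j"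
  using enum_facts(4) by blast

lemma hd_cls: "i < n \<Longrightarrow> hd (ys ! i) \<in> cls i"
  using enum_facts(1) by simp

lemma cls_conj:
  assumes i: "i < n" and y: "y \<in> cls i" and g: "g \<in> carrier G"
  shows "inv g \<otimes> y \<otimes> g \<in> cls i"
proof -
  let ?h = "hd (ys ! i)"
  have h: "?h \<in> carrier G" using hd_cls[OF i] cls_carrier[OF i] by blast
  obtain g0 where g0: "g0 \<in> carrier G" "y = inv g0 \<otimes> ?h \<otimes> g0"
    using y enum_facts(3)[OF i] unfolding conj_class_def by auto
  have "inv g \<otimes> y \<otimes> g = inv (g0 \<otimes> g) \<otimes> ?h \<otimes> (g0 \<otimes> g)"
    using g0 g h by (simp add: inv_mult_group m_assoc)
  then show ?thesis using enum_facts(3)[OF i] g g0 unfolding conj_class_def by auto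
qed

lemma cls_conj_rev:
  assumes i: "i < n" and y: "y \<in> carrier G" and g: "g \<in> carrier G"
    and c: "inv g \<otimes> y \<otimes> g \<in> cls i"
  shows "y \<in> cls i"
proof -
  have X: "inv (inv g) \<otimes> (inv g \<otimes> y \<otimes> g) \<otimes> inv g \<in> cls i"
    by (rule cls_conj[OF i c]) (simp add: g)
  have eq: "inv (inv g) \<otimes> (inv g \<otimes> y \<otimes> g) \<otimes> inv g = y"
    using y g by (simp add: m_assoc)
  show ?thesis using X by (simp only: eq)
qed

lemma Y_carrier: "y \<in> Y \<Longrightarrow> y \<in> carrier G"
  using Ysub by auto

lemma central_by_gens:
  assumes x: "x \<in> carrier G" and c: "\<And>z. z \<in> Y \<Longrightarrow> x \<otimes> z = z \<otimes> x"
  shows "central G x"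
proof (rule centralI[OF x])
  fix g assume g: "g \<in> carrier G"
  obtain w where w: "fst ` set w \<subseteq> Y" "word_eval G w = g" using gen[OF g] by blast
  have "word_eval G w \<otimes> x = x \<otimes> word_eval G w" using w(1)
  proof (induct w)
    case Nil then show ?case using x by (simp add: word_eval_Nil)
  next
    case (Cons l w)
    have l: "fst l \<in> Y" and wY: "fst ` set w \<subseteq> Y" using Cons.prems by auto
    have lc: "fst l \<in> carrier G" using l Y_carrier by blast
    have wc: "word_eval G w \<in> carrier G" using wY Ysub by (intro word_eval_closed) auto
    have cl: "x \<otimes> fst l = fst l \<otimes> x" using c[OF l] .
    have lv: "letter_val G l \<otimes> x = x \<otimes> letter_val G l"
    proof (cases "snd l")
      case True then show ?thesis using cl by (simp add: letter_val_def)
    next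
      case False
      have "inv (fst l) \<otimes> x = inv (fst l) \<otimes> (x \<otimes> fst l) \<otimes> inv (fst l)" using lc x by (simp add: m_assoc)
      also have "\<dots> = inv (fst l) \<otimes> (fst l \<otimes> x) \<otimes> inv (fst l)" using cl by simp
      also have "\<dots> = x \<otimes> inv (fst l)" using lc x by (simp add: m_assoc)
      finally show ?thesis using False by (simp add: letter_val_def)
    qed
    have lvc: "letter_val G l \<in> carrier G" using lc by (rule letter_val_closed)
    have "word_eval G (l # w) \<otimes> x = letter_val G l \<otimes> (word_eval G w \<otimes> x)"
      using lvc wc x by (simp add: word_eval_Cons m_assoc)
    also have "\<dots> = (letter_val G l \<otimes> x) \<otimes> word_eval G w" using Cons.hyps[OF wY] lvc wc x by (simp add: m_assoc)
    also have "\<dots> = x \<otimes> word_eval G (l # w)" using lv lvc wc x by (simp add: word_eval_Cons m_assoc)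
    finally show ?case .
  qed
  then show "g \<otimes> x = x \<otimes> g" using w by simp
qed

lemma Yconj': "g \<in> carrier G \<Longrightarrow> z \<in> Y \<Longrightarrow> g \<otimes> z \<otimes> inv g \<in> Y"
  using Yconj[of "inv g" z] by simp

lemma central_power_exists:
  assumes y: "y \<in> Y" shows "\<exists>q\<ge>1. central G (y [^] (q::nat))"
proof -
  have yc: "y \<in> carrier G" using y Y_carrier by blast
  define h where "h m = restrict (\<lambda>z. y [^] (m::nat) \<otimes> z \<otimes> inv (y [^] m)) Y" for m
  have "range h \<subseteq> Y \<rightarrow>\<^sub>E Y"
    unfolding h_def using yc by (auto intro!: Yconj')
  moreover have "finite (Y \<rightarrow>\<^sub>E Y)" using finY by (intro finite_PiE) auto
  ultimately have "finite (range h)" by (rule finite_subset)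
  then have "\<not> inj h" using infinite_UNIV_nat finite_imageD by blast
  then obtain a b where ab: "h a = h b" "a \<noteq> b" unfolding inj_def by blast
  have "\<exists>a b. a < b \<and> h a = h b" using ab by (metis linorder_neqE_nat)
  then obtain a b where ab: "a < b" "h a = h b" by blast
  define d where "d = b - a"
  have d: "d \<ge> 1" "b = a + d" using ab unfolding d_def by auto
  have "y [^] d \<otimes> z = z \<otimes> y [^] d" if z: "z \<in> Y" for z
  proof -
    have zc: "z \<in> carrier G" using z Y_carrier by blast
    have "h a z = h b z" using ab by simp
    then have e: "y [^] a \<otimes> z \<otimes> inv (y [^] a) = y [^] b \<otimes> z \<otimes> inv (y [^] b)"
      using z yc unfolding h_def by simp
    have yb: "y [^] b = y [^] a \<otimes> y [^] d" using yc d by (simp add: nat_pow_mult)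
    have "z = inv (y [^] a) \<otimes> (y [^] a \<otimes> z \<otimes> inv (y [^] a)) \<otimes> y [^] a"
      using yc zc by (simp add: m_assoc)
    also have "\<dots> = inv (y [^] a) \<otimes> (y [^] b \<otimes> z \<otimes> inv (y [^] b)) \<otimes> y [^] a" using e by simp
    also have "\<dots> = y [^] d \<otimes> z \<otimes> inv (y [^] d)"
      using yc zc by (simp add: yb inv_mult_group m_assoc)
    finally have "z = y [^] d \<otimes> z \<otimes> inv (y [^] d)" .
    then have "z \<otimes> y [^] d = y [^] d \<otimes> z \<otimes> inv (y [^] d) \<otimes> y [^] d" by simp
    also have "\<dots> = y [^] d \<otimes> z" using yc zc by (simp add: m_assoc)
    finally show ?thesis by simp
  qed
  then have "central G (y [^] d)" using yc by (intro central_by_gens) auto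
  then show ?thesis using d by blast
qed

definition pp :: "nat \<Rightarrow> nat" where "pp i = cperiod G (hd (ys ! i))"
definition zz :: "nat \<Rightarrow> 'a" where "zz i = hd (ys ! i) [^] pp i"

lemma pp_props: assumes i: "i < n" shows "pp i \<ge> 1" "central G (zz i)"
proof -
  have hY: "hd (ys ! i) \<in> Y" using hd_cls[OF i] cls_sub[OF i] by blast
  have ex: "\<exists>q::nat. q \<ge> 1 \<and> central G (hd (ys ! i) [^] q)" using central_power_exists[OF hY] by simp
  have "pp i \<ge> 1 \<and> central G (hd (ys ! i) [^] pp i)"
    unfolding pp_def cperiod_def by (rule LeastI_ex[OF ex])
  then show "pp i \<ge> 1" "central G (zz i)" unfolding zz_def by auto
qed

lemma zz_carrier: "i < n \<Longrightarrow> zz i \<in> carrier G"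
  by (rule central_carrier[OF pp_props(2)])

lemma pow_cls: assumes i: "i < n" and y: "y \<in> cls i" shows "y [^] pp i = zz i"
proof -
  let ?h = "hd (ys ! i)"
  have h: "?h \<in> carrier G" using hd_cls[OF i] cls_carrier[OF i] by blast
  obtain g0 where g0: "g0 \<in> carrier G" "y = inv g0 \<otimes> ?h \<otimes> g0"
    using y enum_facts(3)[OF i] unfolding conj_class_def by auto
  have "y [^] pp i = inv g0 \<otimes> zz i \<otimes> g0" using g0 h by (simp add: conj_nat_pow zz_def)
  also have "\<dots> = inv g0 \<otimes> (g0 \<otimes> zz i)" using central_comm[OF pp_props(2)[OF i] g0(1)] g0 zz_carrier[OF i]
    by (simp add: m_assoc)
  also have "\<dots> = zz i" using g0 zz_carrier[OF i] by simp
  finally show ?thesis .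
qed

end


definition wdeg :: "'a list list \<Rightarrow> nat \<Rightarrow> ('a \<times> bool) list \<Rightarrow> int" where
  "wdeg ys i w = sum_list (map (\<lambda>l. if fst l \<in> set (ys ! i) then (if snd l then 1 else -1) else 0) w)"

lemma wdeg_append: "wdeg ys i (u @ v) = wdeg ys i u + wdeg ys i v"
  by (simp add: wdeg_def)

lemma wdeg_Cons: "wdeg ys i (l # w) = (if fst l \<in> set (ys ! i) then (if snd l then 1 else -1) else 0) + wdeg ys i w"
  by (simp add: wdeg_def)

lemma wdeg_Nil: "wdeg ys i [] = 0"
  by (simp add: wdeg_def)

lemma wdeg_winv: "wdeg ys i (winv w) = - wdeg ys i w"
  by (induct w) (auto simp: winv_Cons wdeg_append wdeg_Cons wdeg_Nil winv_def)

context CG begin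

lemma rel_conj:
  assumes r: "(y, z, y') \<in> R" shows "y' = inv z \<otimes> y \<otimes> z"
proof -
  have Y: "y \<in> Y" "z \<in> Y" "y' \<in> Y" using r Rsub by auto
  have "word_congr Y R ([] @ [(z, False), (y, True), (z, True)] @ []) ([] @ [(y', True)] @ [])"
    by (rule wc_rel[OF r])
  then have "word_eval G [(z, False), (y, True), (z, True)] = word_eval G [(y', True)]"
    using pres[of "[(z, False), (y, True), (z, True)]" "[(y', True)]"] Y by simp
  moreover have "y \<in> carrier G" "z \<in> carrier G" "y' \<in> carrier G" using Y Ysub by auto
  ultimately show ?thesis by (simp add: word_eval_def gprod_def letter_val_def m_assoc)
qed

lemma congr_wdeg: "word_congr Y R u v \<Longrightarrow> i < n \<Longrightarrow> wdeg ys i u = wdeg ys i v"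
proof (induct rule: word_congr.induct)
  case (wc_rel y z y' u v)
  have Y: "y \<in> Y" "z \<in> Y" "y' \<in> Y" using wc_rel Rsub by auto
  have zc: "z \<in> carrier G" and yc: "y \<in> carrier G" using Y Ysub by auto
  have eq: "y' = inv z \<otimes> y \<otimes> z" by (rule rel_conj[OF wc_rel(1)])
  have "y \<in> cls i \<longleftrightarrow> y' \<in> cls i"
    using cls_conj[OF wc_rel(2) _ zc] cls_conj_rev[OF wc_rel(2) yc zc] eq by blast
  then show ?case by (simp add: wdeg_append wdeg_Cons wdeg_Nil)
qed (auto simp: wdeg_append wdeg_Cons wdeg_Nil)

lemma eval_wdeg:
  "fst ` set u \<subseteq> Y \<Longrightarrow> fst ` set v \<subseteq> Y \<Longrightarrow> word_eval G u = word_eval G v \<Longrightarrow> i < n \<Longrightarrow>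
   wdeg ys i u = wdeg ys i v"
  using pres congr_wdeg by blast

lemma wordY_carrier: "fst ` set u \<subseteq> Y \<Longrightarrow> fst ` set u \<subseteq> carrier G"
  using Ysub by auto

definition Kdeg :: "'a set" where
  "Kdeg = {g \<in> carrier G. \<forall>w. fst ` set w \<subseteq> Y \<longrightarrow> word_eval G w = g \<longrightarrow> (\<forall>i<n. wdeg ys i w = 0)}"

lemma Kdeg_word:
  assumes "fst ` set w \<subseteq> Y" "\<forall>i<n. wdeg ys i w = 0"
  shows "word_eval G w \<in> Kdeg"
  unfolding Kdeg_def
proof (intro CollectI conjI allI impI)
  show "word_eval G w \<in> carrier G" by (rule word_eval_closed[OF wordY_carrier[OF assms(1)]])
  fix w' i assume w': "fst ` set w' \<subseteq> Y" "word_eval G w' = word_eval G w" and i: "i < n"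
  have "wdeg ys i w' = wdeg ys i w" by (rule eval_wdeg[OF w'(1) assms(1) w'(2) i])
  then show "wdeg ys i w' = 0" using assms(2) i by simp
qed

lemma Kdeg_elem:
  assumes g: "g \<in> Kdeg" obtains w where "fst ` set w \<subseteq> Y" "word_eval G w = g" "\<forall>i<n. wdeg ys i w = 0"
proof -
  have gc: "g \<in> carrier G" and H: "\<And>w. fst ` set w \<subseteq> Y \<Longrightarrow> word_eval G w = g \<Longrightarrow> \<forall>i<n. wdeg ys i w = 0"
    using g unfolding Kdeg_def by auto
  obtain w where w: "fst ` set w \<subseteq> Y" "word_eval G w = g" using gen[OF gc] by blast
  show ?thesis by (rule that[OF w H[OF w]])
qed

lemma Kdeg_subgroup: "subgroup Kdeg G"
proof (rule subgroupI)
  show "Kdeg \<subseteq> carrier G" unfolding Kdeg_def by auto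
  have "word_eval G [] \<in> Kdeg" by (rule Kdeg_word) (auto simp: wdeg_Nil)
  then show "Kdeg \<noteq> {}" by blast
next
  fix a assume a: "a \<in> Kdeg"
  then obtain w where w: "fst ` set w \<subseteq> Y" "word_eval G w = a" "\<forall>i<n. wdeg ys i w = 0" by (rule Kdeg_elem)
  have "word_eval G (winv w) \<in> Kdeg" using w by (intro Kdeg_word) (auto simp: wdeg_winv)
  then show "inv a \<in> Kdeg" using w word_eval_winv[OF wordY_carrier[OF w(1)]] by simp
next
  fix a b assume a: "a \<in> Kdeg" and b: "b \<in> Kdeg"
  obtain u where u: "fst ` set u \<subseteq> Y" "word_eval G u = a" "\<forall>i<n. wdeg ys i u = 0" using a by (rule Kdeg_elem)
  obtain v where v: "fst ` set v \<subseteq> Y" "word_eval G v = b" "\<forall>i<n. wdeg ys i v = 0" using b by (rule Kdeg_elem)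
  have "word_eval G (u @ v) \<in> Kdeg" using u v by (intro Kdeg_word) (auto simp: wdeg_append)
  then show "a \<otimes> b \<in> Kdeg" using u v word_eval_append[OF wordY_carrier[OF u(1)] wordY_carrier[OF v(1)]] by simp
qed

lemma derived_Kdeg: "derived G (carrier G) \<subseteq> Kdeg"
  unfolding derived_def
proof (rule generate_subgroup_incl[OF _ Kdeg_subgroup])
  show "derived_set G (carrier G) \<subseteq> Kdeg"
  proof clarify
    fix x y assume x: "x \<in> carrier G" and y: "y \<in> carrier G"
    obtain u where u: "fst ` set u \<subseteq> Y" "word_eval G u = x" using gen[OF x] by blast
    obtain v where v: "fst ` set v \<subseteq> Y" "word_eval G v = y" using gen[OF y] by blast
    let ?w = "u @ v @ winv u @ winv v"
    have wY: "fst ` set ?w \<subseteq> Y" using u v by (simp add: image_Un)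
    have "word_eval G ?w = x \<otimes> (y \<otimes> (inv x \<otimes> inv y))"
      using u v wordY_carrier[OF u(1)] wordY_carrier[OF v(1)]
      by (simp add: word_eval_append word_eval_winv image_Un)
    also have "\<dots> = x \<otimes> y \<otimes> inv x \<otimes> inv y" using x y by (simp add: m_assoc)
    finally have e: "word_eval G ?w = x \<otimes> y \<otimes> inv x \<otimes> inv y" .
    have "word_eval G ?w \<in> Kdeg" using wY by (intro Kdeg_word) (auto simp: wdeg_append wdeg_winv)
    then show "x \<otimes> y \<otimes> inv x \<otimes> inv y \<in> Kdeg" using e by simp
  qed
qed

lemma derived_wdeg:
  "g \<in> derived G (carrier G) \<Longrightarrow> fst ` set w \<subseteq> Y \<Longrightarrow> word_eval G w = g \<Longrightarrow> i < n \<Longrightarrow> wdeg ys i w = 0"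
  using derived_Kdeg unfolding Kdeg_def by blast

end


context CG begin

definition cc :: "nat \<Rightarrow> 'a list \<Rightarrow> int" where
  "cc i P = int (length (filter (\<lambda>y. y \<in> cls i) P))"

definition Zf :: "(nat \<Rightarrow> int) \<Rightarrow> 'a" where
  "Zf e = gprod G (map (\<lambda>i. zz i [^] e i) [0..<n])"

lemma zz_pow_central: "i < n \<Longrightarrow> central G (zz i [^] (k::int))"
  by (rule central_int_pow[OF pp_props(2)])

lemma zz_pow_carrier: "i < n \<Longrightarrow> zz i [^] (k::int) \<in> carrier G"
  by (rule central_carrier[OF zz_pow_central])

lemma Zf_central: "central G (Zf e)"
  unfolding Zf_def by (rule central_gprod) (auto intro: zz_pow_central)

lemma Zf_carrier: "Zf e \<in> carrier G"
  by (rule central_carrier[OF Zf_central])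

lemma Zf_upd_gen:
  fixes e :: "nat \<Rightarrow> int" and d :: int
  assumes "distinct L" "set L \<subseteq> {..<n}" "i0 < n"
  shows "gprod G (map (\<lambda>i. zz i [^] (e(i0 := e i0 + d)) i) L) =
         (if i0 \<in> set L then zz i0 [^] d else \<one>) \<otimes> gprod G (map (\<lambda>i. zz i [^] e i) L)"
  using assms
proof (induct L)
  case Nil then show ?case by (simp add: gprod_Nil)
next
  case (Cons x L)
  have x: "x < n" using Cons.prems by auto
  have R: "gprod G (map (\<lambda>i. zz i [^] e i) L) \<in> carrier G"
    using Cons.prems by (intro gprod_closed) (auto intro!: zz_pow_carrier)
  have z0: "zz i0 \<in> carrier G" "zz x \<in> carrier G" using zz_carrier Cons.prems x by auto
  have IH: "gprod G (map (\<lambda>i. zz i [^] (e(i0 := e i0 + d)) i) L) =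
         (if i0 \<in> set L then zz i0 [^] d else \<one>) \<otimes> gprod G (map (\<lambda>i. zz i [^] e i) L)"
    using Cons by auto
  show ?case
  proof (cases "x = i0")
    case True
    then have nL: "i0 \<notin> set L" using Cons.prems by auto
    have "zz i0 [^] (e i0 + d) = zz i0 [^] d \<otimes> zz i0 [^] e i0"
      using z0 by (simp add: int_pow_mult[symmetric] add.commute)
    then show ?thesis using True nL IH R z0 by (simp add: gprod_Cons m_assoc)
  next
    case False
    define C where "C = (if i0 \<in> set L then zz i0 [^] d else \<one>)"
    have Cc: "central G C" unfolding C_def using zz_pow_central[OF Cons.prems(3)] central_one by auto
    have "gprod G (map (\<lambda>i. zz i [^] (e(i0 := e i0 + d)) i) (x # L)) = zz x [^] e x \<otimes> (C \<otimes> gprod G (map (\<lambda>i. zz i [^] e i) L))"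
      using False IH by (simp add: gprod_Cons C_def)
    also have "\<dots> = (zz x [^] e x \<otimes> C) \<otimes> gprod G (map (\<lambda>i. zz i [^] e i) L)"
      using z0 R central_carrier[OF Cc] by (simp add: m_assoc)
    also have "\<dots> = (C \<otimes> zz x [^] e x) \<otimes> gprod G (map (\<lambda>i. zz i [^] e i) L)"
      using central_comm[OF Cc, of "zz x [^] e x"] z0 by simp
    also have "\<dots> = C \<otimes> gprod G (map (\<lambda>i. zz i [^] e i) (x # L))"
      using z0 R central_carrier[OF Cc] by (simp add: m_assoc gprod_Cons)
    finally show ?thesis using False by (simp add: C_def)
  qed
qed

lemma Zf_upd: fixes d :: int shows "i0 < n \<Longrightarrow> Zf (e(i0 := e i0 + d)) = zz i0 [^] d \<otimes> Zf e"
  unfolding Zf_def by (subst Zf_upd_gen) auto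

lemma Zf_zero: "Zf (\<lambda>_. 0) = \<one>"
  unfolding Zf_def by (rule gprod_ones) auto

lemma inv_cls: assumes i: "i < n" and y: "y \<in> cls i"
  shows "inv y = y [^] (pp i - 1) \<otimes> inv (zz i)"
proof (rule inv_equality)
  have yc: "y \<in> carrier G" using cls_carrier[OF i y] .
  have zc: "zz i \<in> carrier G" using zz_carrier[OF i] .
  show "y \<in> carrier G" by (rule yc)
  show "y [^] (pp i - 1) \<otimes> inv (zz i) \<in> carrier G" using yc zc by simp
  have pp: "pp i = Suc (pp i - 1)" using pp_props(1)[OF i] by simp
  have "y [^] (pp i - 1) \<otimes> y = y [^] pp i" by (metis nat_pow_Suc pp)
  then have "y [^] (pp i - 1) \<otimes> y = zz i" using pow_cls[OF i y] by simp
  have "y [^] (pp i - 1) \<otimes> inv (zz i) \<otimes> y = y [^] (pp i - 1) \<otimes> (inv (zz i) \<otimes> y)" using yc zc by (simp add: m_assoc)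
  also have "\<dots> = y [^] (pp i - 1) \<otimes> (y \<otimes> inv (zz i))"
    using central_comm[OF central_inv[OF pp_props(2)[OF i]] yc] by simp
  also have "\<dots> = (y [^] (pp i - 1) \<otimes> y) \<otimes> inv (zz i)" using yc zc by (simp add: m_assoc)
  also have "\<dots> = \<one>" using \<open>y [^] (pp i - 1) \<otimes> y = zz i\<close> zc by simp
  finally show "y [^] (pp i - 1) \<otimes> inv (zz i) \<otimes> y = \<one>" .
qed

lemma cc_Cons: "cc i (y # P) = (if y \<in> cls i then 1 else 0) + cc i P"
  by (simp add: cc_def)

lemma cc_append: "cc i (P @ Q) = cc i P + cc i Q"
  by (simp add: cc_def)

lemma cc_replicate: "cc i (replicate k y) = (if y \<in> cls i then int k else 0)"
  by (simp add: cc_def filter_replicate)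

lemma step1:
  "fst ` set w \<subseteq> Y \<Longrightarrow> \<exists>P e. set P \<subseteq> Y \<and> word_eval G w = gprod G P \<otimes> Zf e \<and>
      (\<forall>i<n. cc i P + int (pp i) * e i = wdeg ys i w)"
proof (induct w)
  case Nil
  show ?case
    by (rule exI[of _ "[]"], rule exI[of _ "\<lambda>_. 0"]) (simp add: Zf_zero word_eval_Nil gprod_Nil cc_def wdeg_Nil)
next
  case (Cons l w)
  obtain y b where l: "l = (y, b)" by (cases l)
  have y: "y \<in> Y" and wY: "fst ` set w \<subseteq> Y" using Cons.prems l by auto
  obtain P e where P: "set P \<subseteq> Y" "word_eval G w = gprod G P \<otimes> Zf e"
      "\<forall>i<n. cc i P + int (pp i) * e i = wdeg ys i w" using Cons.hyps[OF wY] by blast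
  obtain i0 where i0: "i0 < n" "y \<in> cls i0" using Y_cls[OF y] by blast
  have yc: "y \<in> carrier G" using y Ysub by auto
  have Pc: "gprod G P \<in> carrier G" using P(1) Ysub by (intro gprod_closed) auto
  have cls_iff: "\<And>i. i < n \<Longrightarrow> y \<in> cls i \<longleftrightarrow> i = i0" using cls_disj i0 by blast
  show ?case
  proof (cases b)
    case True
    show ?thesis
    proof (intro exI conjI)
      show "set (y # P) \<subseteq> Y" using y P by auto
      show "word_eval G (l # w) = gprod G (y # P) \<otimes> Zf e"
        using l True P(2) yc Pc Zf_carrier by (simp add: word_eval_Cons letter_val_def gprod_Cons m_assoc)
      show "\<forall>i<n. cc i (y # P) + int (pp i) * e i = wdeg ys i (l # w)"
        using P(3) l True by (simp add: cc_Cons wdeg_Cons)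
    qed
  next
    case False
    let ?P = "replicate (pp i0 - 1) y @ P"
    let ?e = "e(i0 := e i0 + -1)"
    show ?thesis
    proof (intro exI conjI)
      show "set ?P \<subseteq> Y" using y P by auto
      have zc: "zz i0 \<in> carrier G" by (rule zz_carrier[OF i0(1)])
      have "word_eval G (l # w) = inv y \<otimes> (gprod G P \<otimes> Zf e)"
        using l False P(2) by (simp add: word_eval_Cons letter_val_def)
      also have "\<dots> = y [^] (pp i0 - 1) \<otimes> inv (zz i0) \<otimes> (gprod G P \<otimes> Zf e)"
        using inv_cls[OF i0] by simp
      also have "\<dots> = y [^] (pp i0 - 1) \<otimes> (inv (zz i0) \<otimes> gprod G P) \<otimes> Zf e"
        using yc zc Pc Zf_carrier by (simp add: m_assoc)
      also have "\<dots> = y [^] (pp i0 - 1) \<otimes> (gprod G P \<otimes> inv (zz i0)) \<otimes> Zf e"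
        using central_comm[OF central_inv[OF pp_props(2)[OF i0(1)]] Pc] by simp
      also have "\<dots> = (y [^] (pp i0 - 1) \<otimes> gprod G P) \<otimes> (inv (zz i0) \<otimes> Zf e)"
        using yc zc Pc Zf_carrier by (simp add: m_assoc)
      also have "inv (zz i0) \<otimes> Zf e = Zf ?e"
        using Zf_upd[OF i0(1), of e "-1"] zc by (simp add: int_pow_neg)
      also have "y [^] (pp i0 - 1) \<otimes> gprod G P = gprod G ?P"
        using yc P(1) Ysub by (subst gprod_append) (auto simp: gprod_replicate)
      finally show "word_eval G (l # w) = gprod G ?P \<otimes> Zf ?e" .
      show "\<forall>i<n. cc i ?P + int (pp i) * ?e i = wdeg ys i (l # w)"
      proof (intro allI impI)
        fix i assume i: "i < n"
        show "cc i ?P + int (pp i) * ?e i = wdeg ys i (l # w)"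
        proof (cases "i = i0")
          case True
          have "pp i0 \<ge> 1" using pp_props(1)[OF i0(1)] .
          then show ?thesis using True P(3) i l False i0 by (simp add: cc_append cc_replicate wdeg_Cons algebra_simps of_nat_diff)
        next
          case False
          then have "y \<notin> cls i" using cls_iff[OF i] by simp
          then show ?thesis using False P(3) i l \<open>\<not> b\<close> by (simp add: cc_append cc_replicate wdeg_Cons)
        qed
      qed
    qed
  qed
qed

end


lemma length_filter_count:
  "finite A \<Longrightarrow> length (filter (\<lambda>y. y \<in> A) P) = (\<Sum>y\<in>A. count_list P y)"
proof (induct P)
  case Nil then show ?case by simp
next
  case (Cons x P)
  have "(\<Sum>y\<in>A. count_list (x # P) y) = (\<Sum>y\<in>A. (if x = y then 1 else 0) + count_list P y)"
    by (intro sum.cong) auto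
  also have "\<dots> = (\<Sum>y\<in>A. (if x = y then 1 else 0)) + (\<Sum>y\<in>A. count_list P y)"
    by (rule sum.distrib)
  also have "(\<Sum>y\<in>A. (if x = y then 1 else 0)) = (if x \<in> A then 1 else (0::nat))"
    using Cons.prems by (simp add: sum.delta)
  finally show ?case using Cons by simp
qed

lemma sorted_concat_replicate: "sorted (concat (map (\<lambda>f. replicate (g f) f) [a..<b]))"
proof (induct b)
  case 0 then show ?case by simp
next
  case (Suc b)
  show ?case
  proof (cases "a \<le> b")
    case True
    then have "[a..<Suc b] = [a..<b] @ [b]" by simp
    then show ?thesis using Suc by (auto simp: sorted_append)
  next
    case False
    then have "[a..<Suc b] = []" by simp
    then show ?thesis by simp
  qed
qed

lemma count_concat_replicate:
  "distinct L \<Longrightarrow> count_list (concat (map (\<lambda>y. replicate (c y) y) L)) x = (if x \<in> set L then c x else 0)"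
proof (induct L)
  case Nil then show ?case by simp
next
  case (Cons a L)
  have r: "count_list (replicate k a) x = (if a = x then k else 0)" for k
    by (induct k) auto
  show ?case using Cons by (auto simp: r)
qed

lemma (in monoid) gprod_map_concat:
  "(\<And>x. x \<in> set (concat xss) \<Longrightarrow> f x \<in> carrier G) \<Longrightarrow>
   gprod G (map f (concat xss)) = gprod G (map (\<lambda>xs. gprod G (map f xs)) xss)"
proof (induct xss)
  case (Cons a xss)
  have "set (map f a) \<subseteq> carrier G" "set (map f (concat xss)) \<subseteq> carrier G" using Cons.prems by auto
  then show ?case using Cons by (simp add: gprod_append gprod_Cons)
qed (simp add: gprod_Nil)

context CG begin

abbreviation Yl :: "'a list" where "Yl \<equiv> concat ys"

lemma set_ys: "set ys = (\<lambda>i. ys ! i) ` {..<n}"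
  by (auto simp: set_conv_nth)

lemma ys_distinct: "distinct ys"
proof (subst distinct_conv_nth, intro allI impI)
  fix i j assume i: "i < n" and j: "j < n" and ij: "i \<noteq> j"
  have "cls i \<inter> cls j = {}" by (rule enum_facts(4)[OF i j ij])
  moreover have "cls i \<noteq> {}" using enum_facts(1)[OF i] by simp
  ultimately show "ys ! i \<noteq> ys ! j" by auto
qed

lemma Yl_distinct: "distinct Yl"
proof (rule distinct_concat[OF ys_distinct])
  fix xs assume "xs \<in> set ys"
  then obtain i where "i < n" "xs = ys ! i" by (auto simp: set_conv_nth)
  then show "distinct xs" using enum_facts(2) by simp
next
  fix xs zs assume "xs \<in> set ys" "zs \<in> set ys" "xs \<noteq> zs"
  then obtain i j where "i < n" "xs = ys ! i" "j < n" "zs = ys ! j" "i \<noteq> j" by (auto simp: set_conv_nth)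
  then show "set xs \<inter> set zs = {}" using enum_facts(4) by simp
qed

lemma Yl_set: "set Yl = Y"
  using enum_facts(5) by (simp add: set_ys image_image)

definition rk :: "'a \<Rightarrow> nat" where "rk = the_inv_into {..<length Yl} (\<lambda>f. Yl ! f)"

lemma Yl_bij: "bij_betw (\<lambda>f. Yl ! f) {..<length Yl} (set Yl)"
  using bij_betw_nth[OF Yl_distinct] by simp

lemma rk_nth: "f < length Yl \<Longrightarrow> rk (Yl ! f) = f"
  unfolding rk_def using Yl_bij by (auto intro!: the_inv_into_f_f simp: bij_betw_def)

lemma inj_rk: "inj_on rk (set Yl)"
  unfolding rk_def using Yl_bij
  by (metis bij_betw_def bij_betw_the_inv_into)

lemma sorted_form:
  assumes P: "set P \<subseteq> Y" and s: "sorted (map rk P)"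
  shows "P = concat (map (\<lambda>y. replicate (count_list P y) y) Yl)"
proof -
  let ?c = "count_list P"
  let ?Q = "concat (map (\<lambda>y. replicate (?c y) y) Yl)"
  have Yl_eq: "Yl = map (\<lambda>f. Yl ! f) [0..<length Yl]" by (simp add: map_nth)
  have "map rk ?Q = concat (map (\<lambda>f. replicate (?c (Yl ! f)) (rk (Yl ! f))) [0..<length Yl])"
    by (subst Yl_eq) (simp add: map_concat comp_def)
  also have "\<dots> = concat (map (\<lambda>f. replicate (?c (Yl ! f)) f) [0..<length Yl])"
    by (intro arg_cong[where f=concat] map_cong refl) (simp add: rk_nth)
  finally have mQ: "map rk ?Q = concat (map (\<lambda>f. replicate (?c (Yl ! f)) f) [0..<length Yl])" .
  have sQ: "sorted (map rk ?Q)" unfolding mQ by (rule sorted_concat_replicate)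
  have cnt: "count_list ?Q x = count_list P x" for x
  proof (cases "x \<in> set Yl")
    case True then show ?thesis using count_concat_replicate[OF Yl_distinct] by simp
  next
    case False
    then have "x \<notin> set P" using P Yl_set by auto
    then show ?thesis using False count_concat_replicate[OF Yl_distinct] by simp
  qed
  have "mset ?Q = mset P" by (simp add: multiset_eq_iff count_mset cnt)
  then have "mset (map rk ?Q) = mset (map rk P)" by simp
  then have "sort (map rk P) = map rk ?Q" using sQ by (rule properties_for_sort)
  moreover have "sort (map rk P) = map rk P" using s by (rule sorted_sort_id)
  ultimately have "map rk ?Q = map rk P" by simp
  moreover have "set ?Q \<union> set P \<subseteq> set Yl" using P Yl_set by auto
  ultimately show ?thesis using inj_rk by (metis inj_on_map_eq_map inj_on_subset)
qed

definition NF :: "('a \<Rightarrow> nat) \<Rightarrow> 'a" where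
  "NF c = gprod G (map (\<lambda>cl. gprod G (map (\<lambda>y. y [^] c y) cl)) ys)"

lemma sorted_NF:
  assumes P: "set P \<subseteq> Y" and s: "sorted (map rk P)"
  shows "gprod G P = NF (count_list P)"
proof -
  let ?c = "count_list P"
  have YlC: "set Yl \<subseteq> carrier G" using Yl_set Ysub by simp
  have YC: "\<And>cl y. cl \<in> set ys \<Longrightarrow> y \<in> set cl \<Longrightarrow> y [^] (k::nat) \<in> carrier G" using YlC by auto
  have "gprod G P = gprod G (concat (map (\<lambda>y. replicate (?c y) y) Yl))"
    using sorted_form[OF P s] by simp
  also have "\<dots> = gprod G (map (\<lambda>y. gprod G (replicate (?c y) y)) Yl)"
    using YlC by (subst gprod_concat) (auto simp: comp_def)
  also have "\<dots> = gprod G (map (\<lambda>y. y [^] ?c y) Yl)"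
    using YlC by (intro arg_cong[where f="gprod G"] map_cong refl) (auto simp: gprod_replicate)
  also have "\<dots> = NF ?c"
    unfolding NF_def
  proof (rule gprod_map_concat)
    fix x assume "x \<in> set Yl"
    then have "x \<in> carrier G" using YlC by blast
    then show "x [^] ?c x \<in> carrier G" by simp
  qed
  finally show ?thesis .
qed

lemma sort_step:
  assumes P: "set P \<subseteq> Y"
  shows "\<exists>P'. set P' \<subseteq> Y \<and> sorted (map rk P') \<and> gprod G P' = gprod G P \<and> (\<forall>i<n. cc i P' = cc i P)"
proof -
  have wf: "wf (inv_image (lex less_than) (map rk))" by (intro wf_inv_image wf_lex wf_less_than)
  show ?thesis using P
  proof (induct P rule: wf_induct[OF wf])
    case (1 P)
    show ?case
    proof (cases "sorted (map rk P)")
      case True then show ?thesis using "1.prems" by blast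
    next
      case False
      then obtain k where k: "Suc k < length P" "rk (P ! k) > rk (P ! Suc k)"
        unfolding sorted_iff_nth_Suc by (auto simp: not_le)
      define x where "x = P ! k"
      define y where "y = P ! Suc k"
      define A where "A = take k P"
      define B where "B = drop (Suc (Suc k)) P"
      have Peq: "P = A @ x # y # B"
        unfolding A_def B_def x_def y_def using k(1)
        by (metis Cons_nth_drop_Suc Suc_lessD append_take_drop_id)
      have xY: "x \<in> Y" and yY: "y \<in> Y" and AY: "set A \<subseteq> Y" and BY: "set B \<subseteq> Y"
        using "1.prems" Peq by auto
      have xc: "x \<in> carrier G" and yc: "y \<in> carrier G" using xY yY Ysub by auto
      have AC: "set A \<subseteq> carrier G" and BC: "set B \<subseteq> carrier G" using AY BY Ysub by auto
      define c where "c = inv y \<otimes> x \<otimes> y"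
      have cY: "c \<in> Y" unfolding c_def by (rule Yconj[OF yc xY])
      have cc: "c \<in> carrier G" using cY Ysub by auto
      define P2 where "P2 = A @ y # c # B"
      have P2Y: "set P2 \<subseteq> Y" unfolding P2_def using AY BY yY cY by auto
      have Bc: "gprod G B \<in> carrier G" using BC by (rule gprod_closed)
      have "y \<otimes> (c \<otimes> gprod G B) = x \<otimes> (y \<otimes> gprod G B)"
        unfolding c_def using xc yc Bc by (simp add: m_assoc)
      then have g: "gprod G P2 = gprod G P"
        unfolding P2_def Peq using AC BC xc yc cc by (simp add: gprod_append gprod_Cons)
      have ccP: "cc i P2 = cc i P" if i: "i < n" for i
      proof -
        have "c \<in> cls i \<longleftrightarrow> x \<in> cls i"
          using cls_conj[OF i _ yc, of x] cls_conj_rev[OF i xc yc] unfolding c_def by blast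
        then show ?thesis unfolding P2_def Peq by (simp add: cc_append cc_Cons)
      qed
      have lexs: "(P2, P) \<in> inv_image (lex less_than) (map rk)"
        unfolding inv_image_def lex_conv P2_def Peq
        using k(2) unfolding x_def[symmetric] y_def[symmetric]
        by (auto intro!: exI[of _ "map rk A"])
      obtain P' where "set P' \<subseteq> Y" "sorted (map rk P')" "gprod G P' = gprod G P2" "\<forall>i<n. cc i P' = cc i P2"
        using "1.hyps"[rule_format, OF lexs P2Y] by blast
      then show ?thesis using g ccP by auto
    qed
  qed
qed

lemma step2:
  assumes P: "set P \<subseteq> Y"
  shows "\<exists>c. gprod G P = NF c \<and> (\<forall>i<n. cc i P = int (sum_list (map c (ys ! i))))"
proof -
  obtain P' where P': "set P' \<subseteq> Y" "sorted (map rk P')" "gprod G P' = gprod G P" "\<forall>i<n. cc i P' = cc i P"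
    using sort_step[OF P] by blast
  show ?thesis
  proof (intro exI conjI allI impI)
    show "gprod G P = NF (count_list P')" using sorted_NF[OF P'(1,2)] P'(3) by simp
    fix i assume i: "i < n"
    have "cc i P' = int (\<Sum>y\<in>cls i. count_list P' y)"
      unfolding cc_def by (simp add: length_filter_count)
    also have "(\<Sum>y\<in>cls i. count_list P' y) = sum_list (map (count_list P') (ys ! i))"
      using enum_facts(2)[OF i] by (simp add: sum_list_distinct_conv_sum_set)
    finally show "cc i P = int (sum_list (map (count_list P') (ys ! i)))" using P'(4) i by simp
  qed
qed

end


definition amod :: "nat \<Rightarrow> nat \<Rightarrow> nat" where "amod p c = (c + p - 1) mod p + 1"
definition qdiv :: "nat \<Rightarrow> nat \<Rightarrow> int" where "qdiv p c = int ((c + p - 1) div p) - 1"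

lemma amod_qdiv:
  assumes p: "p \<ge> 1"
  shows "int c = int p * qdiv p c + int (amod p c)" "1 \<le> amod p c" "amod p c \<le> p"
proof -
  define m where "m = c + p - 1"
  have mi: "int m = int c + int p - 1" using p unfolding m_def by simp
  have "int m = int p * int (m div p) + int (m mod p)" by (simp only: of_nat_mult[symmetric] of_nat_add[symmetric] mult_div_mod_eq)
  then show "int c = int p * qdiv p c + int (amod p c)"
    unfolding qdiv_def amod_def m_def[symmetric] using mi by (simp add: algebra_simps)
  show "1 \<le> amod p c" unfolding amod_def by simp
  have "m mod p < p" using p by simp
  then show "amod p c \<le> p" unfolding amod_def m_def[symmetric] by simp
qed

lemma map_idx: "map f xs = map (\<lambda>j. f (xs ! j)) [0..<length xs]"
  by (rule nth_equalityI) auto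

lemma sum_list_map_upt: "sum_list (map f [0..<m]) = (\<Sum>j<m. f j)"
  by (simp add: sum_set_upt_conv_sum_list_nat[symmetric] atLeast0LessThan)

context CG begin

abbreviation len :: "nat \<Rightarrow> nat" where "len i \<equiv> length (ys ! i)"

lemma ys_carrier: "i < n \<Longrightarrow> j < len i \<Longrightarrow> ys ! i ! j \<in> carrier G"
  using cls_carrier by auto

lemma pow_split:
  assumes i: "i < n" and y: "y \<in> cls i"
  shows "y [^] (c::nat) = y [^] amod (pp i) c \<otimes> zz i [^] qdiv (pp i) c"
proof -
  have yc: "y \<in> carrier G" using cls_carrier[OF i y] .
  have p: "pp i \<ge> 1" using pp_props(1)[OF i] .
  have "y [^] c = y [^] (int c)" by (simp add: int_pow_int)
  also have "\<dots> = y [^] (int (amod (pp i) c) + int (pp i) * qdiv (pp i) c)"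
    using amod_qdiv(1)[OF p, of c] by (simp add: add.commute)
  also have "\<dots> = y [^] (int (amod (pp i) c)) \<otimes> y [^] (int (pp i) * qdiv (pp i) c)"
    using yc by (rule int_pow_mult)
  also have "y [^] (int (pp i) * qdiv (pp i) c) = (y [^] (int (pp i))) [^] qdiv (pp i) c"
    using yc by (simp add: int_pow_pow)
  also have "y [^] (int (pp i)) = zz i" using pow_cls[OF i y] by (simp add: int_pow_int)
  finally show ?thesis by (simp add: int_pow_int)
qed

definition Aexp :: "('a \<Rightarrow> nat) \<Rightarrow> nat \<Rightarrow> nat \<Rightarrow> nat" where
  "Aexp c i j = amod (pp i) (c (ys ! i ! j))"
definition Qexp :: "('a \<Rightarrow> nat) \<Rightarrow> nat \<Rightarrow> int" where
  "Qexp c i = (\<Sum>j<len i. qdiv (pp i) (c (ys ! i ! j)))"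
definition Bl :: "(nat \<Rightarrow> nat \<Rightarrow> nat) \<Rightarrow> nat \<Rightarrow> 'a" where
  "Bl a i = gprod G (map (\<lambda>j. (ys ! i ! j) [^] a i j) [0..<len i])"

lemma Bl_carrier: "i < n \<Longrightarrow> Bl a i \<in> carrier G"
  unfolding Bl_def by (rule gprod_closed) (auto intro!: nat_pow_closed ys_carrier)

lemma NF_decomp:
  "NF c = gprod G (map (\<lambda>i. Bl (Aexp c) i \<otimes> zz i [^] Qexp c i) [0..<n])"
proof -
  have "NF c = gprod G (map (\<lambda>i. gprod G (map (\<lambda>y. y [^] c y) (ys ! i))) [0..<n])"
    unfolding NF_def by (subst map_idx) simp
  also have "\<dots> = gprod G (map (\<lambda>i. Bl (Aexp c) i \<otimes> zz i [^] Qexp c i) [0..<n])"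
  proof (intro arg_cong[where f="gprod G"] map_cong refl)
    fix i assume "i \<in> set [0..<n]"
    then have i: "i < n" by simp
    have "gprod G (map (\<lambda>y. y [^] c y) (ys ! i)) = gprod G (map (\<lambda>j. (ys ! i ! j) [^] c (ys ! i ! j)) [0..<len i])"
      by (subst map_idx) simp
    also have "\<dots> = gprod G (map (\<lambda>j. (ys ! i ! j) [^] Aexp c i j \<otimes> zz i [^] qdiv (pp i) (c (ys ! i ! j))) [0..<len i])"
      unfolding Aexp_def by (intro arg_cong[where f="gprod G"] map_cong refl pow_split[OF i]) simp
    also have "\<dots> = Bl (Aexp c) i \<otimes> gprod G (map (\<lambda>j. zz i [^] qdiv (pp i) (c (ys ! i ! j))) [0..<len i])"
      unfolding Bl_def using i
      by (intro gprod_mult_central) (auto intro!: nat_pow_closed ys_carrier zz_pow_central)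
    also have "gprod G (map (\<lambda>j. zz i [^] qdiv (pp i) (c (ys ! i ! j))) [0..<len i]) = zz i [^] Qexp c i"
      unfolding Qexp_def using zz_carrier[OF i] by (simp add: gprod_int_pow_sum sum_list_map_upt)
    finally show "gprod G (map (\<lambda>y. y [^] c y) (ys ! i)) = Bl (Aexp c) i \<otimes> zz i [^] Qexp c i" .
  qed
  finally show ?thesis .
qed

end


context CG begin

lemma zz_npow_central: "i < n \<Longrightarrow> central G (zz i [^] (m::nat))"
  using zz_pow_central[of i "int m"] by (simp add: int_pow_int)

lemma canon_eq: "canonical_element G ys = gprod G (map (\<lambda>i. zz i [^] len i) [0..<n])"
proof -
  have "canonical_element G ys = gprod G (map (\<lambda>i. gprod G (map (\<lambda>y. y [^] pp i) (ys ! i))) [0..<n])"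
    unfolding canonical_element_def pp_def by (subst map_idx) simp
  also have "\<dots> = gprod G (map (\<lambda>i. zz i [^] len i) [0..<n])"
  proof (intro arg_cong[where f="gprod G"] map_cong refl)
    fix i assume "i \<in> set [0..<n]"
    then have i: "i < n" by simp
    have "map (\<lambda>y. y [^] pp i) (ys ! i) = map (\<lambda>y. zz i) (ys ! i)"
      by (intro map_cong refl pow_cls[OF i]) simp
    then show "gprod G (map (\<lambda>y. y [^] pp i) (ys ! i)) = zz i [^] len i"
      using zz_carrier[OF i] by (simp add: map_replicate_const gprod_replicate)
  qed
  finally show ?thesis .
qed

lemma derived_nf:
  assumes g: "g \<in> derived G (carrier G)"
  shows "\<exists>k a. (\<forall>i<n. (\<Sum>j<len i. a i j) + k i * pp i = len i * pp i \<and>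
                   (\<forall>j<len i. 0 < a i j \<and> a i j \<le> pp i) \<and> k i < len i) \<and>
               g = inv (canonical_element G ys) \<otimes>
                   gprod G (map (\<lambda>i. hd (ys ! i) [^] (k i * pp i) \<otimes> Bl a i) [0..<n])"
proof -
  have gc: "g \<in> carrier G" using g derived_in_carrier[of "carrier G"] by auto
  obtain w where w: "fst ` set w \<subseteq> Y" "word_eval G w = g" using gen[OF gc] by blast
  obtain P e where P: "set P \<subseteq> Y" "word_eval G w = gprod G P \<otimes> Zf e"
      "\<forall>i<n. cc i P + int (pp i) * e i = wdeg ys i w" using step1[OF w(1)] by blast
  have wd: "\<And>i. i < n \<Longrightarrow> wdeg ys i w = 0" using derived_wdeg[OF g w] by blast
  obtain c where c: "gprod G P = NF c" "\<forall>i<n. cc i P = int (sum_list (map c (ys ! i)))"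
    using step2[OF P(1)] by blast
  define a where "a = Aexp c"
  define E where "E i = Qexp c i + e i" for i
  define k where "k i = nat (int (len i) + E i)" for i
  have deg: "int (\<Sum>j<len i. a i j) + int (pp i) * E i = 0" if i: "i < n" for i
  proof -
    have p: "pp i \<ge> 1" using pp_props(1)[OF i] .
    have "int (sum_list (map c (ys ! i))) = (\<Sum>j<len i. int (c (ys ! i ! j)))"
      by (subst map_idx) (simp add: sum_list_map_upt)
    also have "\<dots> = (\<Sum>j<len i. int (pp i) * qdiv (pp i) (c (ys ! i ! j)) + int (a i j))"
      unfolding a_def Aexp_def by (intro sum.cong refl amod_qdiv(1)[OF p])
    also have "\<dots> = int (pp i) * Qexp c i + int (\<Sum>j<len i. a i j)"
      unfolding Qexp_def by (simp add: sum.distrib sum_distrib_left)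
    finally have "int (sum_list (map c (ys ! i))) = int (pp i) * Qexp c i + int (\<Sum>j<len i. a i j)" .
    moreover have "cc i P + int (pp i) * e i = 0" using P(3) wd[OF i] i by simp
    moreover have "cc i P = int (sum_list (map c (ys ! i)))" using c(2) i by simp
    ultimately show ?thesis unfolding E_def by (simp add: algebra_simps)
  qed
  have abnd: "0 < a i j \<and> a i j \<le> pp i" if i: "i < n" for i j
  proof -
    have p: "pp i \<ge> 1" using pp_props(1)[OF i] .
    have "1 \<le> amod (pp i) (c (ys ! i ! j))" "amod (pp i) (c (ys ! i ! j)) \<le> pp i"
      using amod_qdiv(2,3)[OF p] by auto
    then show ?thesis unfolding a_def Aexp_def by simp
  qed
  have Ebnd: "E i \<le> -1 \<and> - int (len i) \<le> E i" if i: "i < n" for i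
  proof -
    have p: "int (pp i) \<ge> 1" using pp_props(1)[OF i] by simp
    have l: "len i \<ge> 1" using enum_facts(1)[OF i] by (simp add: Suc_le_eq)
    have s1: "(\<Sum>j<len i. a i j) \<ge> len i"
      using sum_mono[of "{..<len i}" "\<lambda>_. 1::nat" "a i"] abnd[OF i] by (simp add: Suc_le_eq)
    have s2: "(\<Sum>j<len i. a i j) \<le> len i * pp i"
      using sum_mono[of "{..<len i}" "a i" "\<lambda>_. pp i"] abnd[OF i] by simp
    have d: "int (pp i) * (- E i) = int (\<Sum>j<len i. a i j)" using deg[OF i] by simp
    have "int (pp i) * (- E i) \<ge> 1" using d s1 l by linarith
    then have nE: "- E i \<ge> 1"
    proof -
      assume h: "int (pp i) * (- E i) \<ge> 1"
      show "- E i \<ge> 1"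
      proof (rule ccontr)
        assume "\<not> - E i \<ge> 1"
        then have "- E i \<le> 0" by simp
        then have "int (pp i) * (- E i) \<le> 0" using p by (simp add: mult_nonneg_nonpos)
        then show False using h by simp
      qed
    qed
    have s2': "int (\<Sum>j<len i. a i j) \<le> int (pp i) * int (len i)"
      using s2 by (metis of_nat_le_iff of_nat_mult mult.commute)
    moreover have "- E i \<le> int (len i)"
    proof -
      have h: "int (pp i) * (- E i) \<le> int (pp i) * int (len i)" using s2' d by linarith
      have "0 < int (pp i)" using p by simp
      then show ?thesis using h mult_le_cancel_left_pos by blast
    qed
    ultimately show ?thesis using nE by simp
  qed
  have kE: "int (k i) = int (len i) + E i" if i: "i < n" for i
    unfolding k_def using Ebnd[OF i] by simp
  show ?thesis
  proof (intro exI conjI)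
    show "\<forall>i<n. (\<Sum>j<len i. a i j) + k i * pp i = len i * pp i \<and>
                   (\<forall>j<len i. 0 < a i j \<and> a i j \<le> pp i) \<and> k i < len i"
    proof (intro allI impI, intro conjI)
    fix i assume i: "i < n"
    have "int ((\<Sum>j<len i. a i j) + k i * pp i) = int (len i * pp i)"
      using deg[OF i] kE[OF i] by (simp add: algebra_simps)
    then show "(\<Sum>j<len i. a i j) + k i * pp i = len i * pp i" by (simp only: of_nat_eq_iff)
    show "\<forall>j<len i. 0 < a i j \<and> a i j \<le> pp i" using abnd[OF i] by blast
    show "k i < len i" using kE[OF i] Ebnd[OF i] by simp
    qed
  next
    let ?B = "gprod G (map (Bl a) [0..<n])"
    let ?ZE = "gprod G (map (\<lambda>i. zz i [^] E i) [0..<n])"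
    have Bc: "?B \<in> carrier G" by (rule gprod_closed) (auto intro: Bl_carrier)
    have ZEc: "central G ?ZE" by (rule central_gprod) (auto intro: zz_pow_central)
    have LHS: "g = ?B \<otimes> ?ZE"
    proof -
      have "g = NF c \<otimes> Zf e" using w(2) P(2) c(1) by simp
      also have "NF c = ?B \<otimes> gprod G (map (\<lambda>i. zz i [^] Qexp c i) [0..<n])"
        unfolding NF_decomp a_def by (rule gprod_mult_central) (auto intro: Bl_carrier zz_pow_central)
      also have "?B \<otimes> gprod G (map (\<lambda>i. zz i [^] Qexp c i) [0..<n]) \<otimes> Zf e =
                 ?B \<otimes> (gprod G (map (\<lambda>i. zz i [^] Qexp c i) [0..<n]) \<otimes> Zf e)"
      proof -
        have ZQc: "gprod G (map (\<lambda>i. zz i [^] Qexp c i) [0..<n]) \<in> carrier G"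
          by (rule gprod_closed) (auto intro: zz_pow_carrier)
        show ?thesis by (rule m_assoc[OF Bc ZQc Zf_carrier])
      qed
      also have "gprod G (map (\<lambda>i. zz i [^] Qexp c i) [0..<n]) \<otimes> Zf e =
                 gprod G (map (\<lambda>i. zz i [^] Qexp c i \<otimes> zz i [^] e i) [0..<n])"
        unfolding Zf_def by (rule gprod_mult_central[symmetric]) (auto intro: zz_pow_carrier zz_pow_central)
      also have "\<dots> = ?ZE"
        unfolding E_def by (intro arg_cong[where f="gprod G"] map_cong refl) (simp add: int_pow_mult zz_carrier)
      finally show ?thesis .
    qed
    have RHS: "inv (canonical_element G ys) \<otimes> gprod G (map (\<lambda>i. hd (ys ! i) [^] (k i * pp i) \<otimes> Bl a i) [0..<n])
               = ?ZE \<otimes> ?B"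
    proof -
      have "inv (canonical_element G ys) = gprod G (map (\<lambda>i. inv (zz i [^] len i)) [0..<n])"
        unfolding canon_eq by (rule inv_gprod_central) (auto intro: zz_npow_central)
      moreover have "gprod G (map (\<lambda>i. hd (ys ! i) [^] (k i * pp i) \<otimes> Bl a i) [0..<n]) =
                     gprod G (map (\<lambda>i. zz i [^] k i \<otimes> Bl a i) [0..<n])"
      proof (intro arg_cong[where f="gprod G"] map_cong refl)
        fix i assume "i \<in> set [0..<n]"
        then have i: "i < n" by simp
        have "hd (ys ! i) \<in> carrier G" using hd_cls[OF i] cls_carrier[OF i] by blast
        then show "hd (ys ! i) [^] (k i * pp i) \<otimes> Bl a i = zz i [^] k i \<otimes> Bl a i"
          unfolding zz_def by (simp add: nat_pow_pow mult.commute)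
      qed
      moreover have "gprod G (map (\<lambda>i. zz i [^] k i \<otimes> Bl a i) [0..<n]) =
                     gprod G (map (\<lambda>i. zz i [^] k i) [0..<n]) \<otimes> ?B"
        by (rule gprod_central_mult) (auto intro: Bl_carrier zz_npow_central)
      moreover have "gprod G (map (\<lambda>i. inv (zz i [^] len i)) [0..<n]) \<otimes> gprod G (map (\<lambda>i. zz i [^] k i) [0..<n]) = ?ZE"
      proof -
        have "gprod G (map (\<lambda>i. inv (zz i [^] len i)) [0..<n]) \<otimes> gprod G (map (\<lambda>i. zz i [^] k i) [0..<n])
            = gprod G (map (\<lambda>i. inv (zz i [^] len i) \<otimes> zz i [^] k i) [0..<n])"
          by (rule gprod_central_mult[symmetric]) (auto intro: central_inv zz_npow_central central_carrier)
        also have "\<dots> = ?ZE"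
        proof (intro arg_cong[where f="gprod G"] map_cong refl)
          fix i assume "i \<in> set [0..<n]"
          then have i: "i < n" by simp
          have zc: "zz i \<in> carrier G" using zz_carrier[OF i] .
          have "zz i [^] E i = zz i [^] (int (k i) - int (len i))" using kE[OF i] by simp
          also have "\<dots> = zz i [^] k i \<otimes> inv (zz i [^] len i)"
            by (subst int_pow_diff[OF zc]) (simp add: int_pow_int)
          also have "\<dots> = inv (zz i [^] len i) \<otimes> zz i [^] k i"
            using central_comm[OF central_inv[OF zz_npow_central[OF i]], of "zz i [^] k i"] zc by simp
          finally show "inv (zz i [^] len i) \<otimes> zz i [^] k i = zz i [^] E i" by simp
        qed
        finally show ?thesis .
      qed
      moreover have "gprod G (map (\<lambda>i. inv (zz i [^] len i)) [0..<n]) \<in> carrier G"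
        by (rule gprod_closed) (auto intro!: inv_closed nat_pow_closed zz_carrier)
      moreover have "gprod G (map (\<lambda>i. zz i [^] k i) [0..<n]) \<in> carrier G"
        by (rule gprod_closed) (auto intro!: nat_pow_closed zz_carrier)
      ultimately show ?thesis
        using Bc by (simp add: m_assoc[symmetric])
    qed
    show "g = inv (canonical_element G ys) \<otimes> gprod G (map (\<lambda>i. hd (ys ! i) [^] (k i * pp i) \<otimes> Bl a i) [0..<n])"
      unfolding RHS LHS using central_comm[OF ZEc Bc] by simp
  qed
qed

end


lemma finite_bounded_funs1:
  "finite {k :: nat \<Rightarrow> nat. \<forall>i. k i \<le> M \<and> (n \<le> i \<longrightarrow> k i = 0)}"
proof -
  let ?dec = "\<lambda>l i. if i < n then l ! i else (0::nat)"
  have "{k :: nat \<Rightarrow> nat. \<forall>i. k i \<le> M \<and> (n \<le> i \<longrightarrow> k i = 0)} \<subseteq> ?dec ` {l. set l \<subseteq> {..M} \<and> length l = n}"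
  proof
    fix k assume k: "k \<in> {k :: nat \<Rightarrow> nat. \<forall>i. k i \<le> M \<and> (n \<le> i \<longrightarrow> k i = 0)}"
    have "k = ?dec (map k [0..<n])" using k by (auto simp: fun_eq_iff not_less)
    moreover have "map k [0..<n] \<in> {l. set l \<subseteq> {..M} \<and> length l = n}" using k by auto
    ultimately show "k \<in> ?dec ` {l. set l \<subseteq> {..M} \<and> length l = n}" by blast
  qed
  moreover have "finite (?dec ` {l. set l \<subseteq> {..M} \<and> length l = n})"
    by (intro finite_imageI finite_lists_length_eq) auto
  ultimately show ?thesis by (rule finite_subset)
qed

lemma finite_bounded_funs2:
  "finite {a :: nat \<Rightarrow> nat \<Rightarrow> nat. \<forall>i j. a i j \<le> M \<and> (n \<le> i \<or> L \<le> j \<longrightarrow> a i j = 0)}"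
proof -
  let ?S = "{l. set l \<subseteq> {..M} \<and> length l = L}"
  let ?dec = "\<lambda>ls i j. if i < n \<and> j < L then ls ! i ! j else (0::nat)"
  have fS: "finite ?S" by (intro finite_lists_length_eq) auto
  have "{a :: nat \<Rightarrow> nat \<Rightarrow> nat. \<forall>i j. a i j \<le> M \<and> (n \<le> i \<or> L \<le> j \<longrightarrow> a i j = 0)}
        \<subseteq> ?dec ` {ls. set ls \<subseteq> ?S \<and> length ls = n}"
  proof
    fix a assume a: "a \<in> {a :: nat \<Rightarrow> nat \<Rightarrow> nat. \<forall>i j. a i j \<le> M \<and> (n \<le> i \<or> L \<le> j \<longrightarrow> a i j = 0)}"
    let ?ls = "map (\<lambda>i. map (a i) [0..<L]) [0..<n]"
    have "a = ?dec ?ls" using a by (auto simp: fun_eq_iff not_less)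
    moreover have "?ls \<in> {ls. set ls \<subseteq> ?S \<and> length ls = n}" using a by auto
    ultimately show "a \<in> ?dec ` {ls. set ls \<subseteq> ?S \<and> length ls = n}" by blast
  qed
  moreover have "finite (?dec ` {ls. set ls \<subseteq> ?S \<and> length ls = n})"
    by (intro finite_imageI finite_lists_length_eq fS)
  ultimately show ?thesis by (rule finite_subset)
qed

theorem proposition2p5:
  fixes G :: "('a, 'b) monoid_scheme" and Y :: "'a set" and ys :: "'a list list"
  assumes "finite_C_group G Y"
    and "class_enumeration G Y ys"
  shows "finite (derived G (carrier G)) \<and>
    (\<forall>g \<in> derived G (carrier G). \<exists>(k :: nat \<Rightarrow> nat) (a :: nat \<Rightarrow> nat \<Rightarrow> nat).
       (\<forall>i < length ys.
          (\<Sum>j < length (ys ! i). a i j) + k i * cperiod G (hd (ys ! i))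
            = length (ys ! i) * cperiod G (hd (ys ! i)) \<and>
          (\<forall>j < length (ys ! i). 0 < a i j \<and> a i j \<le> cperiod G (hd (ys ! i))) \<and>
          k i < length (ys ! i)) \<and>
       g = inv\<^bsub>G\<^esub> (canonical_element G ys) \<otimes>\<^bsub>G\<^esub>
           gprod G (map (\<lambda>i. (hd (ys ! i)) [^]\<^bsub>G\<^esub> (k i * cperiod G (hd (ys ! i))) \<otimes>\<^bsub>G\<^esub>
                             gprod G (map (\<lambda>j. (ys ! i ! j) [^]\<^bsub>G\<^esub> a i j) [0..<length (ys ! i)]))
                        [0..<length ys]))"
proof -
  have grp: "group G" and finY: "finite Y" and Ysub: "Y \<subseteq> carrier G"
    and Yconj: "\<forall>g \<in> carrier G. \<forall>y \<in> Y. inv\<^bsub>G\<^esub> g \<otimes>\<^bsub>G\<^esub> y \<otimes>\<^bsub>G\<^esub> g \<in> Y"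
    using assms(1) unfolding finite_C_group_def by blast+
  obtain R where R: "R \<subseteq> Y \<times> Y \<times> Y"
      "\<forall>g \<in> carrier G. \<exists>w. fst ` set w \<subseteq> Y \<and> word_eval G w = g"
      "\<forall>u v. fst ` set u \<subseteq> Y \<longrightarrow> fst ` set v \<subseteq> Y \<longrightarrow>
           (word_eval G u = word_eval G v \<longleftrightarrow> word_congr Y R u v)"
    using assms(1) unfolding finite_C_group_def by blast
  interpret C: CG G Y ys R
  proof (rule CG.intro[OF grp], unfold_locales)
    show "finite Y" "Y \<subseteq> carrier G" "R \<subseteq> Y \<times> Y \<times> Y" "class_enumeration G Y ys" by fact+
    show "\<And>g y. g \<in> carrier G \<Longrightarrow> y \<in> Y \<Longrightarrow> inv\<^bsub>G\<^esub> g \<otimes>\<^bsub>G\<^esub> y \<otimes>\<^bsub>G\<^esub> g \<in> Y" using Yconj by blast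
    show "\<And>g. g \<in> carrier G \<Longrightarrow> \<exists>w. fst ` set w \<subseteq> Y \<and> word_eval G w = g" using R(2) by blast
    show "\<And>u v. fst ` set u \<subseteq> Y \<Longrightarrow> fst ` set v \<subseteq> Y \<Longrightarrow>
           (word_eval G u = word_eval G v \<longleftrightarrow> word_congr Y R u v)" using R(3) by blast
  qed
  let ?n = "length ys"
  define F where "F ka = inv\<^bsub>G\<^esub> (canonical_element G ys) \<otimes>\<^bsub>G\<^esub>
           gprod G (map (\<lambda>i. (hd (ys ! i)) [^]\<^bsub>G\<^esub> (fst ka i * cperiod G (hd (ys ! i))) \<otimes>\<^bsub>G\<^esub>
                             gprod G (map (\<lambda>j. (ys ! i ! j) [^]\<^bsub>G\<^esub> snd ka i j) [0..<length (ys ! i)]))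
                        [0..<length ys])" for ka :: "(nat \<Rightarrow> nat) \<times> (nat \<Rightarrow> nat \<Rightarrow> nat)"
  have nf: "\<forall>g \<in> derived G (carrier G). \<exists>(k :: nat \<Rightarrow> nat) (a :: nat \<Rightarrow> nat \<Rightarrow> nat).
       (\<forall>i < length ys.
          (\<Sum>j < length (ys ! i). a i j) + k i * cperiod G (hd (ys ! i))
            = length (ys ! i) * cperiod G (hd (ys ! i)) \<and>
          (\<forall>j < length (ys ! i). 0 < a i j \<and> a i j \<le> cperiod G (hd (ys ! i))) \<and>
          k i < length (ys ! i)) \<and>
       g = inv\<^bsub>G\<^esub> (canonical_element G ys) \<otimes>\<^bsub>G\<^esub>
           gprod G (map (\<lambda>i. (hd (ys ! i)) [^]\<^bsub>G\<^esub> (k i * cperiod G (hd (ys ! i))) \<otimes>\<^bsub>G\<^esub>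
                             gprod G (map (\<lambda>j. (ys ! i ! j) [^]\<^bsub>G\<^esub> a i j) [0..<length (ys ! i)]))
                        [0..<length ys])"
    using C.derived_nf unfolding C.pp_def C.Bl_def by blast
  define Lm where "Lm = Max (length ` set ys)"
  define Pm where "Pm = Max ((\<lambda>i. cperiod G (hd (ys ! i))) ` {..<?n})"
  have lenb: "length (ys ! i) \<le> Lm" if "i < ?n" for i
    unfolding Lm_def using that by (intro Max_ge) auto
  have ppb: "cperiod G (hd (ys ! i)) \<le> Pm" if "i < ?n" for i
    unfolding Pm_def using that by (intro Max_ge) auto
  define K where "K = {k :: nat \<Rightarrow> nat. \<forall>i. k i \<le> Lm \<and> (?n \<le> i \<longrightarrow> k i = 0)}"
  define A where "A = {a :: nat \<Rightarrow> nat \<Rightarrow> nat. \<forall>i j. a i j \<le> Pm \<and> (?n \<le> i \<or> Lm \<le> j \<longrightarrow> a i j = 0)}"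
  have fin: "finite (F ` (K \<times> A))"
    unfolding K_def A_def using finite_bounded_funs1 finite_bounded_funs2 by blast
  have "derived G (carrier G) \<subseteq> F ` (K \<times> A)"
  proof
    fix g assume g: "g \<in> derived G (carrier G)"
    then obtain k a where ka: "\<forall>i < length ys.
          (\<Sum>j < length (ys ! i). a i j) + k i * cperiod G (hd (ys ! i))
            = length (ys ! i) * cperiod G (hd (ys ! i)) \<and>
          (\<forall>j < length (ys ! i). 0 < a i j \<and> a i j \<le> cperiod G (hd (ys ! i))) \<and>
          k i < length (ys ! i)" and geq: "g = F (k, a)"
      using nf unfolding F_def by auto
    define k' where "k' i = (if i < ?n then k i else 0)" for i
    define a' where "a' i j = (if i < ?n \<and> j < length (ys ! i) then a i j else 0)" for i j
    have "k' \<in> K" unfolding K_def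
    proof (intro CollectI allI conjI impI)
      fix i
      show "k' i \<le> Lm"
      proof (cases "i < ?n")
        case True
        then have "k i < length (ys ! i)" using ka by blast
        then show ?thesis using lenb[OF True] True by (simp add: k'_def)
      qed (simp add: k'_def)
      show "?n \<le> i \<Longrightarrow> k' i = 0" by (simp add: k'_def)
    qed
    moreover have "a' \<in> A" unfolding A_def
    proof (intro CollectI allI conjI impI)
      fix i j
      show "a' i j \<le> Pm"
      proof (cases "i < ?n \<and> j < length (ys ! i)")
        case True
        then have "a i j \<le> cperiod G (hd (ys ! i))" using ka by blast
        then show ?thesis using ppb True by (force simp: a'_def)
      qed (auto simp: a'_def)
      show "?n \<le> i \<or> Lm \<le> j \<Longrightarrow> a' i j = 0"
        using lenb by (auto simp: a'_def) (meson leD less_le_trans)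
    qed
    moreover have "F (k, a) = F (k', a')"
      unfolding F_def k'_def a'_def fst_conv snd_conv
      by (intro arg_cong[where f="\<lambda>x. _ \<otimes>\<^bsub>G\<^esub> gprod G x"] map_cong refl arg_cong2[where f="(\<otimes>\<^bsub>G\<^esub>)"]
          arg_cong[where f="gprod G"]) auto
    ultimately show "g \<in> F ` (K \<times> A)" using geq by blast
  qed
  then have "finite (derived G (carrier G))" using fin by (rule finite_subset)
  then show ?thesis using nf by blast
qed


end
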